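(* ($I\Sigma_1$) Let $X\subseteq\mathbb{N}$ be finite, $\omega^{n+3}$-large and $\omega^3$-sparse, and let $c\in\mathbb{N}$ with $c\le\min X$. Then $X$ admits an $(\omega^n,c)$-grouping for $\min X$ colors.
   Context: $\alpha$-largeness for $\alpha<\omega^\omega$: writing ordinals in Cantor normal form, $0[m]=0$, $(\beta+1)[m]=\beta$, $(\beta+\omega^n)[m]=\beta+\omega^{n-1}\cdot m$ for $n\ge1$; a finite $\{x_0<\dots<x_{\ell-1}\}$ is $\alpha$-large if $\alpha[x_0]\cdots[x_{\ell-1}]=0$ (so for a natural number $c$, $c$-large means having at least $c$ elements). $X$ is \emph{$\alpha$-sparse} if $\min X>3$ and for all $x<y$ in $X$ the interval $[x,y)$ is $\alpha$-large. For $P:[X]^2\to\{0,\dots,\min X-1\}$, a finite sequence $\langle F_i\subseteq X:i<l\rangle$ is an \emph{$(\alpha,\beta)$-grouping for $P$} if $\max F_i<\min F_j$ for $i<j$, each $F_i$ is $\alpha$-large, $\{\max F_i:i<l\}$ is $\beta$-large, and $P(x,y)=P(x',y')$ whenever $i<j<l$, $x,x'\in F_i$, $y,y'\in F_j$. $X$ \emph{admits an $(\alpha,\beta)$-grouping for $k$ colors} if every $P:[X]^2\to\{0,\dots,k-1\}$ has one. *)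

theory Defs
  imports Main
begin

text \<open>Ordinals below omega^omega in Cantor normal form:
  the list [e1,...,ek] (e1 \<ge> ... \<ge> ek) represents omega^e1 + ... + omega^ek;
  the empty list is 0.\<close>

type_synonym ord_cnf = "nat list"

definition cnf_ok :: "ord_cnf \<Rightarrow> bool" where
  "cnf_ok a \<longleftrightarrow> sorted_wrt (\<ge>) a"

definition om_pow :: "nat \<Rightarrow> ord_cnf" where
  "om_pow n = [n]"

definition ord_nat :: "nat \<Rightarrow> ord_cnf" where
  "ord_nat c = replicate c 0"

text \<open>Fundamental sequences: 0[m]=0, (b+1)[m]=b, (b+omega^(n+1))[m]=b+omega^n*m.\<close>

definition fund :: "ord_cnf \<Rightarrow> nat \<Rightarrow> ord_cnf" where
  "fund a m = (if a = [] then []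
     else (case last a of 0 \<Rightarrow> butlast a | Suc n \<Rightarrow> butlast a @ replicate m n))"

definition large :: "ord_cnf \<Rightarrow> nat set \<Rightarrow> bool" where
  "large a X \<longleftrightarrow> finite X \<and> foldl fund a (sorted_list_of_set X) = []"

definition sparse :: "ord_cnf \<Rightarrow> nat set \<Rightarrow> bool" where
  "sparse a X \<longleftrightarrow> X \<noteq> {} \<and> Min X > 3 \<and>
     (\<forall>x\<in>X. \<forall>y\<in>X. x < y \<longrightarrow> large a {x..<y})"

definition grouping :: "ord_cnf \<Rightarrow> ord_cnf \<Rightarrow> (nat \<Rightarrow> nat \<Rightarrow> nat) \<Rightarrow> nat set
    \<Rightarrow> (nat \<Rightarrow> nat set) \<Rightarrow> nat \<Rightarrow> bool" where
  "grouping a b P X F l \<longleftrightarrow>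
     (\<forall>i<l. F i \<subseteq> X \<and> large a (F i)) \<and>
     (\<forall>i<l. \<forall>j<l. i < j \<longrightarrow> Max (F i) < Min (F j)) \<and>
     large b ((\<lambda>i. Max (F i)) ` {..<l}) \<and>
     (\<forall>i<l. \<forall>j<l. i < j \<longrightarrow> (\<forall>x\<in>F i. \<forall>x'\<in>F i. \<forall>y\<in>F j. \<forall>y'\<in>F j.
         P x y = P x' y'))"

definition admits_grouping :: "ord_cnf \<Rightarrow> ord_cnf \<Rightarrow> nat \<Rightarrow> nat set \<Rightarrow> bool" where
  "admits_grouping a b k X \<longleftrightarrow>
     (\<forall>P. (\<forall>x\<in>X. \<forall>y\<in>X. x < y \<longrightarrow> P x y < k) \<longrightarrow> (\<exists>F l. grouping a b P X F l))"

end

theory Submission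
  imports Defs "HOL-Library.Multiset" "HOL-Library.FuncSet"
begin


definition fundm :: "nat multiset \<Rightarrow> nat \<Rightarrow> nat multiset" where
  "fundm M z = (if M = {#} then {#} else
     (M - {#Min (set_mset M)#}) + (if Min (set_mset M) = 0 then {#} else replicate_mset z (Min (set_mset M) - 1)))"

inductive Lgm :: "nat multiset \<Rightarrow> nat set \<Rightarrow> bool" where
  base: "Lgm {#} W"
| step: "z \<in> W \<Longrightarrow> Lgm (fundm M z) {w\<in>W. z < w} \<Longrightarrow> Lgm M W"

lemma Lgm_mono: "Lgm M W \<Longrightarrow> W \<subseteq> W' \<Longrightarrow> Lgm M W'"
proof (induction arbitrary: W' rule: Lgm.induct)
  case (base W)
  show ?case by (rule Lgm.base)
next
  case (step z W M)
  have "{w\<in>W. z < w} \<subseteq> {w\<in>W'. z < w}" using step.prems by auto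
  then have L: "Lgm (fundm M z) {w\<in>W'. z < w}" using step.IH by blast
  have "z \<in> W'" using step.prems step.hyps(1) by auto
  from this L show ?case by (rule Lgm.step)
qed

lemma Lgm_inv: "Lgm M W \<Longrightarrow> M \<noteq> {#} \<Longrightarrow> \<exists>z\<in>W. Lgm (fundm M z) {w\<in>W. z < w}"
  by (induction rule: Lgm.cases) auto

lemma Lgm_ne: "Lgm M W \<Longrightarrow> M \<noteq> {#} \<Longrightarrow> W \<noteq> {}"
  using Lgm_inv by blast

definition cnt :: "nat \<Rightarrow> nat multiset \<Rightarrow> nat" where
  "cnt t M = size (filter_mset (\<lambda>x. t \<le> x) M)"

definition mdom :: "nat multiset \<Rightarrow> nat multiset \<Rightarrow> bool" where
  "mdom N M \<longleftrightarrow> (\<forall>t. cnt t N \<le> cnt t M)"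

lemma cnt_plus[simp]: "cnt t (A + B) = cnt t A + cnt t B"
  unfolding cnt_def by simp

lemma cnt_add[simp]: "cnt t (add_mset a B) = (if t \<le> a then 1 else 0) + cnt t B"
  unfolding cnt_def by simp

lemma cnt_empty[simp]: "cnt t {#} = 0"
  unfolding cnt_def by simp

lemma cnt_rep[simp]: "cnt t (replicate_mset z d) = (if t \<le> d then z else 0)"
  unfolding cnt_def by (induction z) auto

lemma cnt_le_size: "cnt t M \<le> size M"
  unfolding cnt_def by (rule size_filter_mset_lesseq)

lemma cnt_all: "\<forall>x\<in>#M. t \<le> x \<Longrightarrow> cnt t M = size M"
proof -
  assume "\<forall>x\<in>#M. t \<le> x"
  then have "filter_mset (\<lambda>x. t \<le> x) M = M" by (induction M) auto
  then show ?thesis unfolding cnt_def by simp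
qed

lemma cnt_less: "m \<in># M \<Longrightarrow> m < t \<Longrightarrow> cnt t M < size M"
proof -
  assume a: "m \<in># M" "m < t"
  then obtain M0 where "M = add_mset m M0" by (metis multi_member_split)
  then show ?thesis using a cnt_le_size[of t M0] by simp
qed

lemma fundm_split:
  assumes "M \<noteq> {#}"
  shows "M = add_mset (Min (set_mset M)) (M - {#Min (set_mset M)#})"
    and "fundm M z = (M - {#Min (set_mset M)#}) + (if Min (set_mset M) = 0 then {#} else replicate_mset z (Min (set_mset M) - 1))"
proof -
  have "Min (set_mset M) \<in># M" using assms by (simp add: Min_in)
  then show "M = add_mset (Min (set_mset M)) (M - {#Min (set_mset M)#})" by simp
  show "fundm M z = (M - {#Min (set_mset M)#}) + (if Min (set_mset M) = 0 then {#} else replicate_mset z (Min (set_mset M) - 1))"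
    using assms unfolding fundm_def by simp
qed

lemma cnt_fundm:
  assumes "M \<noteq> {#}"
  shows "cnt t (fundm M z) + (if t \<le> Min (set_mset M) then 1 else 0)
     = cnt t M + (if Min (set_mset M) \<noteq> 0 \<and> t < Min (set_mset M) then z else 0)"
proof -
  let ?m = "Min (set_mset M)"
  have e: "cnt t M = (if t \<le> ?m then 1 else 0) + cnt t (M - {#?m#})"
    using fundm_split(1)[OF assms] by (metis cnt_add)
  show ?thesis using e fundm_split(2)[OF assms, of z] by auto
qed

lemma cnt_min: "M \<noteq> {#} \<Longrightarrow> t \<le> Min (set_mset M) \<Longrightarrow> cnt t M = size M"
  by (intro cnt_all) auto

lemma mdom_key:
  assumes d: "mdom N M" and N: "N \<noteq> {#}"
  shows "mdom N (fundm M z) \<or> mdom (fundm N z) (fundm M z)"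
proof -
  have sz: "size N \<le> size M" using d cnt_min[OF N, of 0] cnt_le_size[of 0 M] unfolding mdom_def
    by (metis le_trans zero_le)
  then have M: "M \<noteq> {#}" using N by auto
  let ?m = "Min (set_mset M)" and ?n = "Min (set_mset N)"
  have mM: "?m \<in># M" using M by (simp add: Min_in)
  have nN: "?n \<in># N" using N by (simp add: Min_in)
  have FM: "\<And>t. cnt t (fundm M z) + (if t \<le> ?m then 1 else 0)
     = cnt t M + (if ?m \<noteq> 0 \<and> t < ?m then z else 0)" using cnt_fundm[OF M] by blast
  have FN: "\<And>t. cnt t (fundm N z) + (if t \<le> ?n then 1 else 0)
     = cnt t N + (if ?n \<noteq> 0 \<and> t < ?n then z else 0)" using cnt_fundm[OF N] by blast
  have CM: "\<And>t. t \<le> ?m \<Longrightarrow> cnt t M = size M" using cnt_min[OF M] by blast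
  have CN: "\<And>t. t \<le> ?n \<Longrightarrow> cnt t N = size N" using cnt_min[OF N] by blast
  have LM: "\<And>t. ?m < t \<Longrightarrow> cnt t M < size M" using cnt_less[OF mM] by blast
  have LN: "\<And>t. ?n < t \<Longrightarrow> cnt t N < size N" using cnt_less[OF nN] by blast
  have D: "\<And>t. cnt t N \<le> cnt t M" using d unfolding mdom_def by blast
  show ?thesis
  proof (cases "?m < ?n")
    case True
    have "cnt t N \<le> cnt t (fundm M z)" for t
    proof (cases "?m < t")
      case True
      then have "cnt t (fundm M z) = cnt t M" using FM[of t] by simp
      then show ?thesis using D[of t] by simp
    next
      case False
      have "cnt t N = size N" using CN[of t] False \<open>?m < ?n\<close> by simp
      also have "size N = cnt (Suc ?m) N" using CN[of "Suc ?m"] \<open>?m < ?n\<close> by simp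
      also have "\<dots> \<le> cnt (Suc ?m) M" using D by blast
      also have "\<dots> < size M" using LM by simp
      finally have a: "cnt t N < size M" .
      have "cnt t (fundm M z) + 1 \<ge> size M" using FM[of t] CM[of t] False by simp
      then show ?thesis using a by linarith
    qed
    then show ?thesis unfolding mdom_def by blast
  next
    case False
    have "cnt t (fundm N z) \<le> cnt t (fundm M z)" for t
    proof -
      consider "?m < t" | "t \<le> ?n" | "?n < t" "t \<le> ?m" by linarith
      then show ?thesis
      proof cases
        case 1
        then have "cnt t (fundm M z) = cnt t M" using FM[of t] by simp
        moreover have "cnt t (fundm N z) = cnt t N" using FN[of t] 1 False by simp
        ultimately show ?thesis using D[of t] by simp
      next
        case 2
        have i1: "(if ?n \<noteq> 0 \<and> t < ?n then z else 0) \<le> (if ?m \<noteq> 0 \<and> t < ?m then z else 0)"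
          using 2 False by simp
        have "cnt t (fundm N z) + 1 = size N + (if ?n \<noteq> 0 \<and> t < ?n then z else 0)"
          using FN[of t] CN[of t] 2 by simp
        moreover have "cnt t (fundm M z) + 1 = size M + (if ?m \<noteq> 0 \<and> t < ?m then z else 0)"
          using FM[of t] CM[of t] 2 False by simp
        ultimately show ?thesis using i1 sz by linarith
      next
        case 3
        have "cnt t (fundm N z) = cnt t N" using FN[of t] 3 by simp
        moreover have "cnt t N < size N" using LN 3 by simp
        moreover have "cnt t (fundm M z) + 1 \<ge> size M" using FM[of t] CM[of t] 3 by simp
        ultimately show ?thesis using sz by linarith
      qed
    qed
    then show ?thesis unfolding mdom_def by blast
  qed
qed

lemma GD: "Lgm M W \<Longrightarrow> mdom N M \<Longrightarrow> Lgm N W"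
proof (induction arbitrary: N rule: Lgm.induct)
  case (base W)
  then have "N = {#}" unfolding mdom_def using cnt_min[of N 0]
    by (metis cnt_empty le_zero_eq size_eq_0_iff_empty zero_le)
  then show ?case by (simp add: Lgm.base)
next
  case (step z W M)
  show ?case
  proof (cases "N = {#}")
    case True
    then show ?thesis by (simp add: Lgm.base)
  next
    case False
    from mdom_key[OF step.prems False, of z] show ?thesis
    proof
      assume "mdom N (fundm M z)"
      then have "Lgm N {w\<in>W. z < w}" using step.IH by blast
      then show ?thesis by (rule Lgm_mono) auto
    next
      assume "mdom (fundm N z) (fundm M z)"
      then have "Lgm (fundm N z) {w\<in>W. z < w}" using step.IH by blast
      then show ?thesis using step.hyps(1) by (rule Lgm.step[rotated])
    qed
  qed
qed

lemma mdom_sub: "N \<subseteq># M \<Longrightarrow> mdom N M"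
  unfolding mdom_def cnt_def by (simp add: multiset_filter_mono size_mset_mono)

lemma mdom_lower: "e \<le> D \<Longrightarrow> mdom (P + {#e#}) (P + {#D#} + Q)"
  unfolding mdom_def by auto



lemma fundm_plus:
  assumes "B \<noteq> {#}" "\<forall>a\<in>#A. Min (set_mset B) \<le> a"
  shows "fundm (A + B) z = A + fundm B z"
proof -
  let ?m = "Min (set_mset B)"
  let ?R = "(if ?m = 0 then {#} else replicate_mset z (?m - 1))"
  have mB: "?m \<in># B" using assms(1) by simp
  have ne: "A + B \<noteq> {#}" using assms(1) by simp
  have Mineq: "Min (set_mset (A + B)) = ?m"
    using assms mB by (intro Min_eqI) auto
  have as: "A + B - {#?m#} = A + (B - {#?m#})" using mB
    by (intro multiset_diff_union_assoc) simp
  have "fundm (A + B) z = (A + B - {#?m#}) + ?R"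
    using fundm_split(2)[OF ne, of z] unfolding Mineq .
  also have "\<dots> = A + ((B - {#?m#}) + ?R)" unfolding as by (simp only: add.assoc)
  also have "\<dots> = A + fundm B z" unfolding fundm_split(2)[OF assms(1), of z] ..
  finally show ?thesis .
qed

lemma fundm_single[simp]: "fundm {#Suc e#} z = replicate_mset z e"
  unfolding fundm_def by simp

lemma fundm_zero_rep[simp]: "fundm (replicate_mset (Suc k) 0) z = replicate_mset k 0"
  unfolding fundm_def by (simp add: Min_eqI)

lemma fundm_elems: assumes "b \<in># fundm B z" shows "\<exists>b'\<in>#B. b \<le> b'"
proof -
  have Bne: "B \<noteq> {#}" using assms unfolding fundm_def by (auto split: if_splits)
  let ?m = "Min (set_mset B)"
  have mB: "?m \<in># B" using Bne by simp
  have "b \<in># (B - {#?m#}) + (if ?m = 0 then {#} else replicate_mset z (?m - 1))"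
    using assms fundm_split(2)[OF Bne, of z] by metis
  then have "b \<in># B - {#?m#} \<or> b \<in># (if ?m = 0 then {#} else replicate_mset z (?m - 1))"
    by (simp only: union_iff)
  then have "b \<in># B - {#?m#} \<or> b = ?m - 1" by (auto split: if_splits)
  then show ?thesis
  proof
    assume "b \<in># B - {#?m#}"
    then show ?thesis by (meson in_diffD order_refl)
  next
    assume "b = ?m - 1"
    then show ?thesis using mB by (intro bexI[of _ ?m]) auto
  qed
qed

lemma SPLIT: "Lgm M W \<Longrightarrow> M = A + B \<Longrightarrow> B \<noteq> {#} \<Longrightarrow> (\<forall>a\<in>#A. \<forall>b\<in>#B. b \<le> a)
  \<Longrightarrow> \<exists>t. Lgm B {w\<in>W. w \<le> t} \<and> Lgm A {w\<in>W. t < w}"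
proof (induction arbitrary: A B rule: Lgm.induct)
  case (base W)
  then show ?case by simp
next
  case (step z W M)
  have "Min (set_mset B) \<in># B" using step.prems(2) by simp
  then have mA: "\<forall>a\<in>#A. Min (set_mset B) \<le> a" using step.prems(3) by blast
  have F: "fundm M z = A + fundm B z" using fundm_plus[OF step.prems(2) mA] step.prems(1) by simp
  show ?case
  proof (cases "fundm B z = {#}")
    case True
    have "Lgm B {w\<in>W. w \<le> z}"
    proof (rule Lgm.step[of z])
      show "z \<in> {w\<in>W. w \<le> z}" using step.hyps(1) by simp
      show "Lgm (fundm B z) {w \<in> {w\<in>W. w \<le> z}. z < w}" using True by (simp add: Lgm.base)
    qed
    moreover have "Lgm A {w\<in>W. z < w}" using step.hyps(2) F True by simp
    ultimately show ?thesis by blast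
  next
    case False
    have el: "\<forall>a\<in>#A. \<forall>b\<in>#fundm B z. b \<le> a"
      using fundm_elems step.prems(3) by (meson le_trans)
    obtain t where t1: "Lgm (fundm B z) {w\<in>{w\<in>W. z < w}. w \<le> t}"
      and t2: "Lgm A {w\<in>{w\<in>W. z < w}. t < w}"
      using step.IH[OF F False el] by blast
    have "{w\<in>{w\<in>W. z < w}. w \<le> t} \<noteq> {}" using Lgm_ne[OF t1 False] .
    then have zt: "z < t" by auto
    have "Lgm B {w\<in>W. w \<le> t}"
    proof (rule Lgm.step[of z])
      show "z \<in> {w\<in>W. w \<le> t}" using step.hyps(1) zt by simp
      have "{w \<in> {w\<in>W. w \<le> t}. z < w} = {w\<in>{w\<in>W. z < w}. w \<le> t}" by auto
      then show "Lgm (fundm B z) {w \<in> {w\<in>W. w \<le> t}. z < w}" using t1 by simp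
    qed
    moreover have "{w\<in>{w\<in>W. z < w}. t < w} = {w\<in>W. t < w}" using zt by auto
    ultimately show ?thesis using t2 by auto
  qed
qed

lemma REPL: "Lgm M W \<Longrightarrow> M = R + {#Suc D#} \<Longrightarrow> (\<forall>w\<in>W. y < w)
  \<Longrightarrow> Lgm (R + replicate_mset (Suc y) D) W"
proof (induction arbitrary: R rule: Lgm.induct)
  case (base W)
  then show ?case by simp
next
  case (step z W M)
  have yz: "y < z" using step.prems(2) step.hyps(1) by blast
  show ?case
  proof (cases "\<forall>r\<in>#R. Suc D \<le> r")
    case True
    have "fundm M z = R + replicate_mset z D"
      using fundm_plus[of "{#Suc D#}" R z] True step.prems(1) by simp
    then have L: "Lgm (R + replicate_mset z D) {w\<in>W. z < w}" using step.hyps(2) by simp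
    have "mdom (R + replicate_mset (Suc y) D) (R + replicate_mset z D)"
      unfolding mdom_def using yz by auto
    then have "Lgm (R + replicate_mset (Suc y) D) {w\<in>W. z < w}" using GD[OF L] by blast
    then show ?thesis by (rule Lgm_mono) auto
  next
    case False
    then obtain r where r: "r \<in># R" "\<not> Suc D \<le> r" by blast
    then have Rne: "R \<noteq> {#}" by auto
    have "Min (set_mset R) \<le> r" using r(1) by simp
    then have mR: "Min (set_mset R) \<le> D" using r(2) by simp
    have "fundm ({#Suc D#} + R) z = {#Suc D#} + fundm R z"
      using fundm_plus[OF Rne, of "{#Suc D#}" z] mR by simp
    then have "fundm M z = fundm R z + {#Suc D#}" using step.prems(1) by (simp add: add.commute)
    moreover have "\<forall>w\<in>{w\<in>W. z < w}. y < w" using step.prems(2) by simp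
    ultimately have "Lgm (fundm R z + replicate_mset (Suc y) D) {w\<in>W. z < w}"
      using step.IH by blast
    moreover have "fundm (replicate_mset (Suc y) D + R) z = replicate_mset (Suc y) D + fundm R z"
      using fundm_plus[OF Rne, of "replicate_mset (Suc y) D" z] mR by simp
    then have "fundm (R + replicate_mset (Suc y) D) z = fundm R z + replicate_mset (Suc y) D"
      by (simp add: add.commute)
    ultimately have "Lgm (fundm (R + replicate_mset (Suc y) D) z) {w\<in>W. z < w}" by simp
    with step.hyps(1) show ?thesis by (rule Lgm.step)
  qed
qed



lemma KSL:
  assumes Bne: "B \<noteq> {#}" and L: "Lgm (fundm (A + B) z) W" and zW: "\<forall>w\<in>W. z < w"
  shows "Lgm (A + fundm B z) W"
proof (cases "\<forall>a\<in>#A. Min (set_mset B) \<le> a")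
  case True
  then show ?thesis using L fundm_plus[OF Bne True] by simp
next
  case False
  let ?E = "Min (set_mset B)"
  obtain a where a: "a \<in># A" "a < ?E" using False by (auto simp: not_le)
  then have Ane: "A \<noteq> {#}" by auto
  let ?e = "Min (set_mset A)"
  have "?e \<le> a" using a(1) by simp
  then have eE: "?e < ?E" using a(2) by simp
  have eB: "\<forall>b\<in>#B. ?e \<le> b" using eE by (meson Min_le finite_set_mset le_trans less_imp_le)
  have "fundm (B + A) z = B + fundm A z" using fundm_plus[OF Ane eB] .
  then have L2: "Lgm (fundm A z + B) W" using L by (simp add: add.commute)
  obtain D where D: "?E = Suc D" using eE by (cases ?E) auto
  define B0 where "B0 = B - {#?E#}"
  have EB: "?E \<in># B" using Bne by simp
  have B: "B = B0 + {#Suc D#}" unfolding B0_def using EB D by simp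
  have eq: "fundm A z + B = (fundm A z + B0) + {#Suc D#}" using B by (simp only: add.assoc)
  have L3: "Lgm ((fundm A z + B0) + replicate_mset (Suc z) D) W"
    using REPL[OF L2 eq zW] .
  have fB: "fundm B z = B0 + replicate_mset z D"
    using fundm_split(2)[OF Bne, of z] D unfolding B0_def by simp
  obtain e A0 where A: "A = add_mset e A0" and ee: "e = ?e" and
      fA: "fundm A z = A0 + (if e = 0 then {#} else replicate_mset z (e - 1))"
    using fundm_split[OF Ane] by blast
  have eD: "e \<le> D" using eE D ee by simp
  have "mdom (A + fundm B z) ((fundm A z + B0) + replicate_mset (Suc z) D)"
    unfolding mdom_def
  proof
    fix t
    have "cnt t (A + fundm B z) = (if t \<le> e then 1 else 0) + cnt t A0 + cnt t B0 + (if t \<le> D then z else 0)"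
      unfolding A fB by simp
    moreover have "cnt t ((fundm A z + B0) + replicate_mset (Suc z) D) \<ge> cnt t A0 + cnt t B0 + (if t \<le> D then Suc z else 0)"
      unfolding fA by simp
    moreover have "(if t \<le> e then 1 else 0) + (if t \<le> D then z else 0) \<le> (if t \<le> D then Suc z else (0::nat))"
      using eD by simp
    ultimately show "cnt t (A + fundm B z) \<le> cnt t ((fundm A z + B0) + replicate_mset (Suc z) D)"
      by linarith
  qed
  then show ?thesis using GD[OF L3] by blast
qed

lemma sum_remove_mset:
  fixes \<alpha> :: "nat \<Rightarrow> nat multiset"
  assumes "i0 < K"
  shows "(\<Sum>i<K. \<alpha> i) = \<alpha> i0 + (\<Sum>i\<in>{..<K} - {i0}. \<alpha> i)"
  using assms by (simp add: sum.remove)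

lemma GAME: "finite W \<Longrightarrow> Lgm (\<Sum>i<(K::nat). (\<alpha> i :: nat multiset)) W \<Longrightarrow> 0 < K \<Longrightarrow> (\<forall>w\<in>W. g w < K)
  \<Longrightarrow> \<exists>i<K. Lgm (\<alpha> i) {w\<in>W. g w = i}"
proof (induction "card W" arbitrary: W \<alpha> rule: less_induct)
  case less
  show ?case
  proof (cases "(\<Sum>i<K. \<alpha> i) = {#}")
    case True
    have "{#} = \<alpha> 0 + (\<Sum>i\<in>{..<K} - {0}. \<alpha> i)"
      using True sum_remove_mset[of 0 K \<alpha>] less.prems(3) by simp
    then have "\<alpha> 0 = {#}" by (metis empty_eq_union)
    then show ?thesis using less.prems(3) by (intro exI[of _ 0]) (simp add: Lgm.base)
  next
    case Gne: False
    obtain z where zW: "z \<in> W" and Lz: "Lgm (fundm (\<Sum>i<K. \<alpha> i) z) {w\<in>W. z < w}"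
      using Lgm_inv[OF less.prems(2) Gne] by blast
    let ?i0 = "g z"
    have i0: "?i0 < K" using less.prems(4) zW by blast
    have cardlt: "card {w\<in>W. z < w} < card W"
      using zW less.prems(1) by (intro psubset_card_mono) auto
    show ?thesis
    proof (cases "\<alpha> ?i0 = {#}")
      case True
      then show ?thesis using i0 by (intro exI[of _ ?i0]) (simp add: Lgm.base)
    next
      case False
      let ?A = "\<Sum>i\<in>{..<K} - {?i0}. \<alpha> i"
      have M: "(\<Sum>i<K. \<alpha> i) = ?A + \<alpha> ?i0" using sum_remove_mset[OF i0, of \<alpha>] by (simp add: add.commute)
      have zW': "\<forall>w\<in>{w\<in>W. z < w}. z < w" by simp
      have L: "Lgm (?A + fundm (\<alpha> ?i0) z) {w\<in>W. z < w}"
        using KSL[OF False _ zW'] Lz M by simp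
      define \<alpha>' where "\<alpha>' = \<alpha>(?i0 := fundm (\<alpha> ?i0) z)"
      have "(\<Sum>i<K. \<alpha>' i) = \<alpha>' ?i0 + (\<Sum>i\<in>{..<K} - {?i0}. \<alpha>' i)"
        using sum_remove_mset[OF i0] .
      also have "(\<Sum>i\<in>{..<K} - {?i0}. \<alpha>' i) = ?A"
        unfolding \<alpha>'_def by (intro sum.cong) auto
      finally have S: "(\<Sum>i<K. \<alpha>' i) = ?A + fundm (\<alpha> ?i0) z" unfolding \<alpha>'_def by (simp add: add.commute)
      have L': "Lgm (\<Sum>i<K. \<alpha>' i) {w\<in>W. z < w}" using L S by simp
      have "\<exists>i<K. Lgm (\<alpha>' i) {w\<in>{w\<in>W. z < w}. g w = i}"
        using less.hyps[OF cardlt _ L' less.prems(3)] less.prems(1,4) by simp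
      then obtain i where i: "i < K" "Lgm (\<alpha>' i) {w\<in>{w\<in>W. z < w}. g w = i}" by blast
      show ?thesis
      proof (cases "i = ?i0")
        case True
        have "{w\<in>{w\<in>W. g w = ?i0}. z < w} = {w\<in>{w\<in>W. z < w}. g w = ?i0}" by auto
        then have "Lgm (fundm (\<alpha> ?i0) z) {w\<in>{w\<in>W. g w = ?i0}. z < w}"
          using i(2) True unfolding \<alpha>'_def by simp
        moreover have "z \<in> {w\<in>W. g w = ?i0}" using zW by simp
        ultimately have "Lgm (\<alpha> ?i0) {w\<in>W. g w = ?i0}" by (metis Lgm.step)
        then show ?thesis using i0 by blast
      next
        case False
        then have "Lgm (\<alpha> i) {w\<in>{w\<in>W. z < w}. g w = i}" using i(2) unfolding \<alpha>'_def by simp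
        then have "Lgm (\<alpha> i) {w\<in>W. g w = i}" by (rule Lgm_mono) auto
        then show ?thesis using i(1) by blast
      qed
    qed
  qed
qed

lemma sum_const_mset: "(\<Sum>i<K. {#m#}) = replicate_mset K (m::nat)"
  by (induction K) auto

lemma PH:
  assumes fin: "finite Y" and L: "Lgm {#Suc m#} Y" and K: "0 < K" and g: "\<forall>y\<in>Y. g y < K \<and> K \<le> y"
  shows "\<exists>i<K. Lgm {#m#} {y\<in>Y. g y = i}"
proof -
  obtain z where z: "z \<in> Y" "Lgm (replicate_mset z m) {w\<in>Y. z < w}"
    using Lgm_inv[OF L] by auto
  have "K \<le> z" using g z(1) by blast
  then have "mdom (replicate_mset K m) (replicate_mset z m)" unfolding mdom_def by auto
  then have L2: "Lgm (\<Sum>i<K. {#m#}) {w\<in>Y. z < w}" using GD[OF z(2)] sum_const_mset by simp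
  obtain i where "i < K" "Lgm {#m#} {w\<in>{w\<in>Y. z < w}. g w = i}"
    using GAME[OF _ L2 K, of g] fin g by auto
  moreover have "{w\<in>{w\<in>Y. z < w}. g w = i} \<subseteq> {y\<in>Y. g y = i}" by auto
  ultimately show ?thesis using Lgm_mono by blast
qed

lemma BLOCKS: "Lgm (replicate_mset c e) W \<Longrightarrow>
  \<exists>E. (\<forall>j<c. E j \<subseteq> W \<and> Lgm {#e#} (E j)) \<and> (\<forall>i j. i < j \<longrightarrow> j < c \<longrightarrow> (\<forall>x\<in>E i. \<forall>y\<in>E j. x < y))"
proof (induction c arbitrary: W)
  case 0
  then show ?case by auto
next
  case (Suc c)
  have eq: "replicate_mset (Suc c) e = replicate_mset c e + {#e#}" by simp
  have le: "\<forall>a\<in>#replicate_mset c e. \<forall>b\<in>#{#e#}. b \<le> a" by simp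
  obtain t where t1: "Lgm {#e#} {w\<in>W. w \<le> t}" and t2: "Lgm (replicate_mset c e) {w\<in>W. t < w}"
    using SPLIT[OF Suc.prems eq _ le] by auto
  obtain E' where E': "\<forall>j<c. E' j \<subseteq> {w\<in>W. t < w} \<and> Lgm {#e#} (E' j)"
    "\<forall>i j. i < j \<longrightarrow> j < c \<longrightarrow> (\<forall>x\<in>E' i. \<forall>y\<in>E' j. x < y)"
    using Suc.IH[OF t2] by blast
  define E where "E = (\<lambda>j. if j = 0 then {w\<in>W. w \<le> t} else E' (j - 1))"
  have "\<forall>j<Suc c. E j \<subseteq> W \<and> Lgm {#e#} (E j)"
  proof (intro allI impI)
    fix j assume j: "j < Suc c"
    show "E j \<subseteq> W \<and> Lgm {#e#} (E j)"
    proof (cases "j = 0")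
      case True
      then show ?thesis using t1 unfolding E_def by auto
    next
      case False
      then have "j - 1 < c" using j by simp
      then have "E' (j - 1) \<subseteq> {w\<in>W. t < w} \<and> Lgm {#e#} (E' (j - 1))" using E'(1) by blast
      then show ?thesis using False unfolding E_def by auto
    qed
  qed
  moreover have "\<forall>i j. i < j \<longrightarrow> j < Suc c \<longrightarrow> (\<forall>x\<in>E i. \<forall>y\<in>E j. x < y)"
  proof (intro allI impI ballI)
    fix i j x y assume ij: "i < j" "j < Suc c" and xy: "x \<in> E i" "y \<in> E j"
    show "x < y"
    proof (cases "i = 0")
      case True
      then have "x \<le> t" using xy unfolding E_def by auto
      moreover have "t < y"
      proof -
        have "j - 1 < c" "j \<noteq> 0" using ij by auto
        then have "E' (j - 1) \<subseteq> {w\<in>W. t < w}" using E'(1) by blast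
        then show ?thesis using xy(2) \<open>j \<noteq> 0\<close> unfolding E_def by auto
      qed
      ultimately show ?thesis by simp
    next
      case False
      then show ?thesis using E'(2)[rule_format, of "i - 1" "j - 1" x y] xy ij unfolding E_def by auto
    qed
  qed
  ultimately show ?case by blast
qed



lemma E0: "Lgm M W \<Longrightarrow> M = replicate_mset k 0 \<Longrightarrow> finite W \<Longrightarrow> k \<le> card W"
proof (induction arbitrary: k rule: Lgm.induct)
  case (base W)
  then show ?case by simp
next
  case (step z W M)
  show ?case
  proof (cases k)
    case 0
    then show ?thesis by simp
  next
    case (Suc k')
    have "fundm M z = replicate_mset k' 0" using step.prems(1) Suc fundm_zero_rep by metis
    then have "k' \<le> card {w\<in>W. z < w}" using step.IH step.prems(2) by simp
    moreover have "card {w\<in>W. z < w} < card W"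
      using step.hyps(1) step.prems(2) by (intro psubset_card_mono) auto
    ultimately show ?thesis using Suc by simp
  qed
qed

lemma E2: assumes "Lgm {#Suc 0#} W" "W \<subseteq> {a<..<u}" shows "2*a+2 < u"
proof -
  obtain z where z: "z \<in> W" "Lgm (replicate_mset z 0) {w\<in>W. z < w}"
    using Lgm_inv[OF assms(1)] by auto
  have sub: "{w\<in>W. z < w} \<subseteq> {z<..<u}" using assms(2) by auto
  then have fin: "finite {w\<in>W. z < w}" using finite_subset by blast
  have "z \<le> card {w\<in>W. z < w}" using E0[OF z(2) refl fin] .
  also have "\<dots> \<le> card {z<..<u}" using sub by (intro card_mono) auto
  finally have "z \<le> u - Suc z" by simp
  moreover have "a < z" "z < u" using z(1) assms(2) by auto
  ultimately show ?thesis by linarith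
qed

lemma E3: "1 \<le> k \<Longrightarrow> Lgm (replicate_mset k (Suc 0)) W \<Longrightarrow> W \<subseteq> {a<..<u} \<Longrightarrow> 2^k*(a+1) < u"
proof (induction k arbitrary: a W)
  case 0
  then show ?case by simp
next
  case (Suc k)
  show ?case
  proof (cases "k = 0")
    case True
    then show ?thesis using E2[of W a u] Suc.prems by simp
  next
    case False
    have eq: "replicate_mset (Suc k) (Suc 0) = replicate_mset k (Suc 0) + {#Suc 0#}" by simp
    have le: "\<forall>a\<in>#replicate_mset k (Suc 0). \<forall>b\<in>#{#Suc 0#}. b \<le> a" by simp
    obtain t where t1: "Lgm {#Suc 0#} {w\<in>W. w \<le> t}" and t2: "Lgm (replicate_mset k (Suc 0)) {w\<in>W. t < w}"
      using SPLIT[OF Suc.prems(2) eq _ le] by auto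
    have "2*a+2 < Suc t" using E2[OF t1] Suc.prems(3) by (intro E2[OF t1]) auto
    moreover have "{w\<in>W. t < w} \<subseteq> {t<..<u}" using Suc.prems(3) by auto
    then have "2^k*(t+1) < u" using Suc.IH[OF _ t2] False by auto
    moreover have "2^Suc k*(a+1) = 2^k*(2*a+2)" by simp
    moreover have "2^k*(2*a+2) \<le> 2^k*(t+1)" using calculation(1) by (intro mult_le_mono2) simp
    ultimately show ?thesis by linarith
  qed
qed

lemma E4: assumes "Lgm {#Suc (Suc 0)#} W" "W \<subseteq> {a<..<u}" shows "2^(a+1) < u"
proof -
  obtain z where z: "z \<in> W" "Lgm (replicate_mset z (Suc 0)) {w\<in>W. z < w}"
    using Lgm_inv[OF assms(1)] by auto
  have az: "a < z" "z < u" using z(1) assms(2) by auto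
  have "{w\<in>W. z < w} \<subseteq> {z<..<u}" using assms(2) by auto
  then have "2^z*(z+1) < u" using E3[OF _ z(2), of z u] az by auto
  moreover have "2^(a+1) \<le> (2::nat)^z" using az by (intro power_increasing) auto
  moreover have "(2::nat)^z \<le> 2^z*(z+1)" by simp
  ultimately show ?thesis by linarith
qed

lemma E5: assumes "2 \<le> k" "Lgm (replicate_mset k (Suc (Suc 0))) W" "W \<subseteq> {a<..<u}"
  shows "2^(2^(a+1)) < u"
proof -
  obtain k' where k: "k = Suc k'" "1 \<le> k'" using assms(1) by (cases k) auto
  have eq: "replicate_mset k (Suc (Suc 0)) = replicate_mset k' (Suc (Suc 0)) + {#Suc (Suc 0)#}" using k by simp
  have le: "\<forall>a\<in>#replicate_mset k' (Suc (Suc 0)). \<forall>b\<in>#{#Suc (Suc 0)#}. b \<le> a" by simp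
  obtain t where t1: "Lgm {#Suc (Suc 0)#} {w\<in>W. w \<le> t}" and t2: "Lgm (replicate_mset k' (Suc (Suc 0))) {w\<in>W. t < w}"
    using SPLIT[OF assms(2) eq _ le] by auto
  have "mdom {#Suc (Suc 0)#} (replicate_mset k' (Suc (Suc 0)))" unfolding mdom_def using k by auto
  then have t3: "Lgm {#Suc (Suc 0)#} {w\<in>W. t < w}" using GD[OF t2] by blast
  have "2^(a+1) < Suc t" using assms(3) by (intro E4[OF t1]) auto
  moreover have "2^(t+1) < u" using assms(3) by (intro E4[OF t3]) auto
  moreover have "(2::nat)^(2^(a+1)) \<le> 2^(t+1)" using calculation(1) by (intro power_increasing) auto
  ultimately show ?thesis by linarith
qed

lemma sq_le_pow: "v*v \<le> (2::nat)^(v+1)"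
proof (induction v)
  case 0
  then show ?case by simp
next
  case (Suc v)
  show ?case
  proof (cases "v \<le> 2")
    case True
    then have "v = 0 \<or> v = 1 \<or> v = 2" by auto
    then show ?thesis by auto
  next
    case False
    have "Suc v * Suc v = v*v + 2*v + 1" by simp
    also have "\<dots> \<le> v*v + v*v"
    proof -
      have "3*v \<le> v*v" using False by (intro mult_le_mono1) simp
      then show ?thesis using False by linarith
    qed
    also have "\<dots> \<le> 2^(v+1) + 2^(v+1)" using Suc.IH by simp
    finally show ?thesis by simp
  qed
qed

lemma SB3: assumes "Lgm {#Suc (Suc (Suc 0))#} {v..<u}" "4 \<le> v" shows "v^v < u"
proof -
  obtain z where z: "z \<in> {v..<u}" "Lgm (replicate_mset z (Suc (Suc 0))) {w\<in>{v..<u}. z < w}"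
    using Lgm_inv[OF assms(1)] by auto
  have "{w\<in>{v..<u}. z < w} \<subseteq> {z<..<u}" by auto
  then have "2^(2^(z+1)) < u" using E5[OF _ z(2), of z u] z(1) assms(2) by auto
  moreover have "(2::nat)^(2^(v+1)) \<le> 2^(2^(z+1))" using z(1) by (intro power_increasing) auto
  moreover have "v^v \<le> ((2::nat)^v)^v" by (intro power_mono) (simp_all add: less_imp_le)
  moreover have "((2::nat)^v)^v = 2^(v*v)" by (simp add: power_mult)
  moreover have "(2::nat)^(v*v) \<le> 2^(2^(v+1))" using sq_le_pow by (intro power_increasing) auto
  ultimately show ?thesis by linarith
qed

lemma sorted_last_min: "sorted_wrt (\<ge>) (\<alpha>::nat list) \<Longrightarrow> \<alpha> \<noteq> [] \<Longrightarrow> x \<in> set \<alpha> \<Longrightarrow> last \<alpha> \<le> x"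
proof -
  assume a: "sorted_wrt (\<ge>) \<alpha>" "\<alpha> \<noteq> []" "x \<in> set \<alpha>"
  have "\<alpha> = butlast \<alpha> @ [last \<alpha>]" using a(2) by simp
  then have "sorted_wrt (\<ge>) (butlast \<alpha> @ [last \<alpha>])" using a(1) by simp
  then have "\<forall>y\<in>set (butlast \<alpha>). last \<alpha> \<le> y" by (simp add: sorted_wrt_append)
  moreover have "x \<in> set (butlast \<alpha>) \<or> x = last \<alpha>" using a(3) \<open>\<alpha> = _\<close> by (metis butlast_snoc in_set_butlastD last_snoc rotate1.simps(2) set_rotate1 set_ConsD)
  ultimately show ?thesis by auto
qed

lemma fund_mset: assumes "sorted_wrt (\<ge>) \<alpha>" "\<alpha> \<noteq> []"
  shows "mset (fund \<alpha> z) = fundm (mset \<alpha>) z"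
proof -
  have Mn: "Min (set_mset (mset \<alpha>)) = last \<alpha>"
    using assms sorted_last_min[OF assms] by (intro Min_eqI) auto
  have ne: "mset \<alpha> \<noteq> {#}" using assms(2) by simp
  have F: "fundm (mset \<alpha>) z = (mset \<alpha> - {#last \<alpha>#}) + (if last \<alpha> = 0 then {#} else replicate_mset z (last \<alpha> - 1))"
    using fundm_split(2)[OF ne, of z] unfolding Mn .
  have "mset \<alpha> = mset (butlast \<alpha>) + {#last \<alpha>#}"
    using assms(2) by (metis append_butlast_last_id mset.simps(1) mset.simps(2) mset_append)
  then have mb: "mset (butlast \<alpha>) = mset \<alpha> - {#last \<alpha>#}" by simp
  show ?thesis
  proof (cases "last \<alpha>")
    case 0
    then have "fund \<alpha> z = butlast \<alpha>" using assms(2) unfolding fund_def by simp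
    then show ?thesis using F mb 0 by simp
  next
    case (Suc n)
    then have "fund \<alpha> z = butlast \<alpha> @ replicate z n" using assms(2) unfolding fund_def by simp
    then show ?thesis using F mb Suc by simp
  qed
qed

lemma sorted_rep: "sorted_wrt (\<ge>) (replicate z (n::nat))"
  by (induction z) auto

lemma fund_sorted: assumes "sorted_wrt (\<ge>) (\<alpha>::nat list)" shows "sorted_wrt (\<ge>) (fund \<alpha> z)"
proof (cases "\<alpha> = []")
  case True
  then show ?thesis unfolding fund_def by simp
next
  case False
  have "sorted_wrt (\<ge>) (butlast \<alpha> @ [last \<alpha>])" using assms False by simp
  then have sb: "sorted_wrt (\<ge>) (butlast \<alpha>)" and lb: "\<forall>y\<in>set (butlast \<alpha>). last \<alpha> \<le> y"
    by (simp_all add: sorted_wrt_append)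
  show ?thesis
  proof (cases "last \<alpha>")
    case 0
    then show ?thesis using False sb unfolding fund_def by simp
  next
    case (Suc n)
    have "sorted_wrt (\<ge>) (butlast \<alpha> @ replicate z n)"
      using sb lb Suc sorted_rep[of z n] by (auto simp: sorted_wrt_append)
    then show ?thesis using False Suc unfolding fund_def by simp
  qed
qed

lemma large_Lgm: "sorted_wrt (\<ge>) \<alpha> \<Longrightarrow> foldl fund \<alpha> xs = [] \<Longrightarrow> sorted_wrt (<) xs \<Longrightarrow> Lgm (mset \<alpha>) (set xs)"
proof (induction xs arbitrary: \<alpha>)
  case Nil
  then show ?case by (simp add: Lgm.base)
next
  case (Cons x xs)
  show ?case
  proof (cases "\<alpha> = []")
    case True
    then show ?thesis by (simp add: Lgm.base)
  next
    case False
    have f: "foldl fund (fund \<alpha> x) xs = []" using Cons.prems(2) by simp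
    have s: "sorted_wrt (<) xs" using Cons.prems(3) by simp
    have "Lgm (mset (fund \<alpha> x)) (set xs)"
      using Cons.IH[OF fund_sorted[OF Cons.prems(1)] f s] .
    then have L: "Lgm (fundm (mset \<alpha>) x) (set xs)" using fund_mset[OF Cons.prems(1) False] by simp
    have eq: "set xs = {w\<in>set (x#xs). x < w}" using Cons.prems(3) by auto
    have "Lgm (fundm (mset \<alpha>) x) {w\<in>set (x#xs). x < w}" unfolding eq[symmetric] by (rule L)
    then show ?thesis by (rule Lgm.step[rotated]) simp
  qed
qed

lemma Lgm_large: "Lgm M Z \<Longrightarrow> M = mset \<alpha> \<Longrightarrow> sorted_wrt (\<ge>) \<alpha> \<Longrightarrow> \<exists>W\<subseteq>Z. large \<alpha> W"
proof (induction arbitrary: \<alpha> rule: Lgm.induct)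
  case (base W)
  then show ?case unfolding large_def by (intro exI[of _ "{}"]) simp
next
  case (step z Z M)
  show ?case
  proof (cases "\<alpha> = []")
    case True
    then show ?thesis unfolding large_def by (intro exI[of _ "{}"]) simp
  next
    case False
    have "fundm M z = mset (fund \<alpha> z)" using fund_mset[OF step.prems(2) False] step.prems(1) by simp
    then have "\<exists>W\<subseteq>{w\<in>Z. z < w}. large (fund \<alpha> z) W"
      using step.IH[OF _ fund_sorted[OF step.prems(2)]] by simp
    then obtain W' where W': "W' \<subseteq> {w\<in>Z. z < w}" "large (fund \<alpha> z) W'"
      by blast
    have fin: "finite W'" using W'(2) unfolding large_def by simp
    let ?W = "insert z W'"
    have "Min ?W = z" using W'(1) fin by (intro Min_eqI) auto
    moreover have "?W - {z} = W'" using W'(1) by auto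
    ultimately have "sorted_list_of_set ?W = z # sorted_list_of_set W'"
      using sorted_list_of_set_nonempty[of ?W] fin by simp
    then have "large \<alpha> ?W" using W'(2) fin unfolding large_def by simp
    moreover have "?W \<subseteq> Z" using W'(1) step.hyps(1) by auto
    ultimately show ?thesis by blast
  qed
qed



lemma foldl_rep0: "foldl fund (replicate k 0) xs = replicate (k - length xs) 0"
proof (induction xs arbitrary: k)
  case Nil
  then show ?case by simp
next
  case (Cons x xs)
  have "fund (replicate k 0) x = replicate (k - 1) 0"
  proof (cases k)
    case 0
    then show ?thesis unfolding fund_def by simp
  next
    case (Suc k')
    have r: "replicate (Suc k') (0::nat) = replicate k' 0 @ [0]" by (simp add: replicate_append_same)
    show ?thesis unfolding fund_def Suc r by simp
  qed
  then show ?case using Cons.IH[of "k - 1"] by simp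
qed

lemma large_ne: "large [n] F \<Longrightarrow> F \<noteq> {} \<and> finite F"
  unfolding large_def by auto

theorem mainTheorem18:
  fixes X :: "nat set" and n c :: nat
  assumes "finite X"
    and "large (om_pow (n + 3)) X"
    and "sparse (om_pow 3) X"
    and "c \<le> Min X"
  shows "admits_grouping (om_pow n) (ord_nat c) (Min X) X"
proof -
  note finX = assms(1)
  define x0 where "x0 = Min X"
  have Xne: "X \<noteq> {}" and x0gt: "3 < x0" and spr: "\<forall>x\<in>X. \<forall>y\<in>X. x < y \<longrightarrow> large [3] {x..<y}"
    using assms(3) unfolding sparse_def om_pow_def x0_def by auto
  have x0X: "x0 \<in> X" using Xne finX unfolding x0_def by simp
  have x0le: "\<And>x. x \<in> X \<Longrightarrow> x0 \<le> x" using finX unfolding x0_def by simp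
  have cx0: "c \<le> x0" using assms(4) unfolding x0_def .
  have SB: "x^x < y" if xy: "x \<in> X" "y \<in> X" "x < y" for x y
  proof -
    have "large [3] {x..<y}" using spr xy by blast
    then have "foldl fund [3] (sorted_list_of_set {x..<y}) = []" unfolding large_def by simp
    then have "Lgm (mset [3]) (set (sorted_list_of_set {x..<y}))"
      by (intro large_Lgm) auto
    then have "Lgm {#Suc (Suc (Suc 0))#} {x..<y}" by (simp add: numeral_3_eq_3)
    moreover have "4 \<le> x" using x0le[OF xy(1)] x0gt by simp
    ultimately show ?thesis by (rule SB3)
  qed
  have e3: "n + 3 = Suc (Suc (Suc n))" by simp
  have "foldl fund [Suc (Suc (Suc n))] (sorted_list_of_set X) = []" using assms(2) unfolding large_def om_pow_def e3 by simp
  then have "Lgm (mset [Suc (Suc (Suc n))]) (set (sorted_list_of_set X))"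
    by (intro large_Lgm) auto
  then have LX: "Lgm {#Suc (Suc (Suc n))#} X" using finX by simp
  obtain z where zX: "z \<in> X" and Lz: "Lgm (replicate_mset z (Suc (Suc n))) {w\<in>X. z < w}"
    using Lgm_inv[OF LX] by auto
  define X1 where "X1 = {w\<in>X. z < w}"
  have "c \<le> z" using cx0 x0le[OF zX] by simp
  then have "mdom (replicate_mset c (Suc (Suc n))) (replicate_mset z (Suc (Suc n)))"
    unfolding mdom_def by auto
  then have Lc: "Lgm (replicate_mset c (Suc (Suc n))) X1" using GD[OF Lz] unfolding X1_def by blast
  obtain E where E1: "\<forall>j<c. E j \<subseteq> X1 \<and> Lgm {#Suc (Suc n)#} (E j)"
    and E2: "\<forall>i j. i < j \<longrightarrow> j < c \<longrightarrow> (\<forall>x\<in>E i. \<forall>y\<in>E j. x < y)"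
    using BLOCKS[OF Lc] by blast
  have EX: "\<And>j. j < c \<Longrightarrow> E j \<subseteq> X" using E1 unfolding X1_def by blast
  have Ez: "\<And>j y. j < c \<Longrightarrow> y \<in> E j \<Longrightarrow> z < y" using E1 unfolding X1_def by blast
  show ?thesis
    unfolding admits_grouping_def x0_def[symmetric]
  proof (intro allI impI)
    fix P assume Pb: "\<forall>x\<in>X. \<forall>y\<in>X. x < y \<longrightarrow> P x y < x0"
    have "\<forall>j. \<exists>G. \<exists>y0. j < c \<longrightarrow> (G \<subseteq> E j \<and> Lgm {#Suc n#} G \<and> y0 \<in> G \<and>
       (\<forall>x\<in>X. \<forall>y\<in>G. x < Min (E j) \<longrightarrow> P x y = P x y0))"
    proof (intro allI)
      fix j
      show "\<exists>G. \<exists>y0. j < c \<longrightarrow> (G \<subseteq> E j \<and> Lgm {#Suc n#} G \<and> y0 \<in> G \<and>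
       (\<forall>x\<in>X. \<forall>y\<in>G. x < Min (E j) \<longrightarrow> P x y = P x y0))"
      proof (cases "j < c")
        case False
        then show ?thesis by blast
      next
        case True
        note j = True
      have LE: "Lgm {#Suc (Suc n)#} (E j)" using E1 j by blast
      have finE: "finite (E j)" using EX[OF j] finX finite_subset by blast
      have Ene: "E j \<noteq> {}" using Lgm_ne[OF LE] by simp
      define u where "u = Min (E j)"
      have uE: "u \<in> E j" unfolding u_def using finE Ene by simp
      have uX: "u \<in> X" using uE EX[OF j] by blast
      have ule: "\<And>y. y \<in> E j \<Longrightarrow> u \<le> y" unfolding u_def using finE by simp
      have zu: "z < u" using Ez[OF j uE] .
      define S where "S = {x\<in>X. x < u}"
      have finS: "finite S" unfolding S_def using finX by simp
      have x0S: "x0 \<in> S" unfolding S_def using x0X x0le[OF zX] zu by simp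
      define v where "v = Max S"
      have vS: "v \<in> S" unfolding v_def using finS x0S by (intro Max_in) auto
      have vX: "v \<in> X" "v < u" using vS unfolding S_def by auto
      have vu: "v^v < u" using SB[OF vX(1) uX vX(2)] .
      have Sv: "S \<subseteq> {1..v}"
      proof
        fix x assume "x \<in> S"
        then have "x \<le> v" "x \<in> X" unfolding v_def using finS unfolding S_def by auto
        then show "x \<in> {1..v}" using x0le x0gt by fastforce
      qed
      have cardS: "card S \<le> v" using card_mono[OF _ Sv] by simp
      have x0v: "x0 \<le> v" unfolding v_def using finS x0S by simp
      define PS where "PS = PiE S (\<lambda>_. {..<x0})"
      define K where "K = card PS"
      have K: "K = x0 ^ card S" unfolding K_def PS_def by (simp add: card_PiE[OF finS])
      have "K \<le> v ^ card S" unfolding K using x0v by (intro power_mono) auto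
      also have "\<dots> \<le> v ^ v" using cardS x0v x0gt by (intro power_increasing) auto
      finally have Ku: "K < u" using vu by simp
      have Kpos: "0 < K" unfolding K using x0gt by simp
      have finPS: "finite PS" unfolding PS_def using finS by (intro finite_PiE) auto
      obtain enc where enc: "bij_betw enc PS {0..<card PS}" using ex_bij_betw_finite_nat[OF finPS] by blast
      define g where "g y = enc (restrict (\<lambda>x. P x y) S)" for y
      have inPi: "restrict (\<lambda>x. P x y) S \<in> PS" if y: "y \<in> E j" for y
        unfolding PS_def
      proof (rule restrict_PiE_iff[THEN iffD2], intro ballI)
        fix x assume "x \<in> S"
        then have "x \<in> X" "x < y" unfolding S_def using ule[OF y] by auto
        then show "P x y \<in> {..<x0}" using Pb EX[OF j] y by auto
      qed
      have gK: "\<forall>y\<in>E j. g y < K \<and> K \<le> y"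
      proof
        fix y assume y: "y \<in> E j"
        have "g y \<in> {0..<card PS}" unfolding g_def using bij_betw_apply[OF enc inPi[OF y]] .
        then show "g y < K \<and> K \<le> y" using Ku ule[OF y] unfolding K_def by auto
      qed
      obtain i where i: "i < K" "Lgm {#Suc n#} {y\<in>E j. g y = i}"
        using PH[OF finE LE Kpos gK] by blast
      define G where "G = {y\<in>E j. g y = i}"
      have Gne: "G \<noteq> {}" using Lgm_ne[OF i(2)] unfolding G_def by simp
      then obtain y0 where y0: "y0 \<in> G" by blast
      have hom: "\<forall>x\<in>X. \<forall>y\<in>G. x < Min (E j) \<longrightarrow> P x y = P x y0"
      proof (intro ballI impI)
        fix x y assume x: "x \<in> X" and y: "y \<in> G" and xu: "x < Min (E j)"
        have yE: "y \<in> E j" and y0E: "y0 \<in> E j" using y y0 unfolding G_def by auto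
        have "g y = g y0" using y y0 unfolding G_def by simp
        then have "restrict (\<lambda>x. P x y) S = restrict (\<lambda>x. P x y0) S"
          unfolding g_def using bij_betw_imp_inj_on[OF enc] inPi[OF yE] inPi[OF y0E]
          by (meson inj_onD)
        moreover have "x \<in> S" unfolding S_def u_def using x xu by simp
        ultimately show "P x y = P x y0" by (metis restrict_apply')
      qed
      have GE: "G \<subseteq> E j" unfolding G_def by auto
      have LG: "Lgm {#Suc n#} G" using i(2) unfolding G_def .
      show ?thesis
        by (intro exI[of _ G] exI[of _ y0] impI conjI GE LG y0 hom)
      qed
    qed
    from choice[OF this] obtain G where G1: "\<forall>j. \<exists>y0. j < c \<longrightarrow> (G j \<subseteq> E j \<and> Lgm {#Suc n#} (G j) \<and> y0 \<in> G j \<and>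
       (\<forall>x\<in>X. \<forall>y\<in>G j. x < Min (E j) \<longrightarrow> P x y = P x y0))" by blast
    from choice[OF G1] obtain y0 where G: "\<forall>j. j < c \<longrightarrow> (G j \<subseteq> E j \<and> Lgm {#Suc n#} (G j) \<and> y0 j \<in> G j \<and>
       (\<forall>x\<in>X. \<forall>y\<in>G j. x < Min (E j) \<longrightarrow> P x y = P x (y0 j)))" by blast
    have GX: "\<And>j. j < c \<Longrightarrow> G j \<subseteq> X" using G EX by blast
    have GLg: "\<And>j. j < c \<Longrightarrow> Lgm {#Suc n#} (G j)" using G by blast
    have y0G: "\<And>j. j < c \<Longrightarrow> y0 j \<in> G j" using G by blast
    have Ghom: "\<And>j x y. j < c \<Longrightarrow> x \<in> X \<Longrightarrow> y \<in> G j \<Longrightarrow> x < Min (E j) \<Longrightarrow> P x y = P x (y0 j)"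
      using G by blast
    have GE: "\<And>j. j < c \<Longrightarrow> G j \<subseteq> E j" using G by blast
    define PT where "PT = PiE {..<c} (\<lambda>_. {..<x0})"
    define K2 where "K2 = card PT"
    have K2: "K2 = x0 ^ c" unfolding K2_def PT_def by (simp add: card_PiE)
    have finPT: "finite PT" unfolding PT_def by (intro finite_PiE) auto
    obtain enc2 where enc2: "bij_betw enc2 PT {0..<card PT}" using ex_bij_betw_finite_nat[OF finPT] by blast
    have K2pos: "0 < K2" unfolding K2 using x0gt by simp
    have K2le: "K2 \<le> x0 ^ x0" unfolding K2 using cx0 x0gt by (intro power_increasing) auto
    have "\<forall>i. \<exists>F. i < c \<longrightarrow> (F \<subseteq> G i \<and> large [n] F \<and>
        (\<forall>x\<in>F. \<forall>x'\<in>F. \<forall>j. i < j \<longrightarrow> j < c \<longrightarrow> P x (y0 j) = P x' (y0 j)))"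
    proof (intro allI)
      fix i
      show "\<exists>F. i < c \<longrightarrow> (F \<subseteq> G i \<and> large [n] F \<and>
        (\<forall>x\<in>F. \<forall>x'\<in>F. \<forall>j. i < j \<longrightarrow> j < c \<longrightarrow> P x (y0 j) = P x' (y0 j)))"
      proof (cases "i < c")
        case False
        then show ?thesis by simp
      next
        case True
        note i = True
        have finG: "finite (G i)" using GX[OF i] finX finite_subset by blast
        define tup where "tup x = restrict (\<lambda>j. if i < j then P x (y0 j) else 0) {..<c}" for x
        have tPT: "tup x \<in> PT" if x: "x \<in> G i" for x
          unfolding PT_def tup_def
        proof (rule restrict_PiE_iff[THEN iffD2], intro ballI)
          fix j assume j: "j \<in> {..<c}"
          show "(if i < j then P x (y0 j) else 0) \<in> {..<x0}"
          proof (cases "i < j")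
            case True
            have "x \<in> E i" using x GE[OF i] by blast
            moreover have "y0 j \<in> E j" using y0G GE j by auto
            ultimately have "x < y0 j" using E2[rule_format, of i j x "y0 j"] True j by simp
            moreover have "x \<in> X" using x GX[OF i] by blast
            moreover have "y0 j \<in> X" using y0G[of j] GX[of j] j by auto
            ultimately show ?thesis using Pb True by simp
          next
            case False
            then show ?thesis using x0gt by simp
          qed
        qed
        define col where "col x = enc2 (tup x)" for x
        have colK: "\<forall>x\<in>G i. col x < K2 \<and> K2 \<le> x"
        proof
          fix x assume x: "x \<in> G i"
          have "col x \<in> {0..<card PT}" unfolding col_def using bij_betw_apply[OF enc2 tPT[OF x]] .
          moreover have "x \<in> X" "x0 < x"
          proof -
            show xX: "x \<in> X" using x GX[OF i] by blast
            have "x \<in> E i" using x GE[OF i] by blast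
            then have "z < x" using Ez[OF i] by blast
            then show "x0 < x" using x0le[OF zX] by simp
          qed
          moreover have "x0 ^ x0 < x" using SB[OF x0X \<open>x \<in> X\<close> \<open>x0 < x\<close>] .
          ultimately have "col x < K2" "K2 \<le> x" using K2le unfolding K2_def by simp_all
          then show "col x < K2 \<and> K2 \<le> x" by simp
        qed
        obtain k where k: "k < K2" "Lgm {#n#} {x\<in>G i. col x = k}"
          using PH[OF finG GLg[OF i] K2pos colK] by blast
        obtain F where F: "F \<subseteq> {x\<in>G i. col x = k}" "large [n] F"
          using Lgm_large[OF k(2), of "[n]"] by auto
        have hom: "\<forall>x\<in>F. \<forall>x'\<in>F. \<forall>j. i < j \<longrightarrow> j < c \<longrightarrow> P x (y0 j) = P x' (y0 j)"
        proof (intro ballI allI impI)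
          fix x x' j assume x: "x \<in> F" and x': "x' \<in> F" and ij: "i < j" "j < c"
          have xG: "x \<in> G i" "x' \<in> G i" using x x' F(1) by auto
          have "col x = col x'" using x x' F(1) by auto
          then have "tup x = tup x'" unfolding col_def
            using bij_betw_imp_inj_on[OF enc2] tPT[OF xG(1)] tPT[OF xG(2)] by (meson inj_onD)
          then have "tup x j = tup x' j" by simp
          then show "P x (y0 j) = P x' (y0 j)" unfolding tup_def using ij by simp
        qed
        have FGi: "F \<subseteq> G i" using F(1) by auto
        show ?thesis by (intro exI[of _ F] impI conjI FGi F(2) hom)
      qed
    qed
    from choice[OF this] obtain F where F: "\<forall>i. i < c \<longrightarrow> (F i \<subseteq> G i \<and> large [n] (F i) \<and>
        (\<forall>x\<in>F i. \<forall>x'\<in>F i. \<forall>j. i < j \<longrightarrow> j < c \<longrightarrow> P x (y0 j) = P x' (y0 j)))" ..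
    have FG: "\<And>i. i < c \<Longrightarrow> F i \<subseteq> G i" using F by blast
    have FE: "\<And>i. i < c \<Longrightarrow> F i \<subseteq> E i" using FG GE by blast
    have FX: "\<And>i. i < c \<Longrightarrow> F i \<subseteq> X" using FG GX by blast
    have Fl: "\<And>i. i < c \<Longrightarrow> large [n] (F i)" using F by blast
    have Fne: "\<And>i. i < c \<Longrightarrow> F i \<noteq> {} \<and> finite (F i)" using Fl large_ne by blast
    have Fhom: "\<And>i x x' j. i < c \<Longrightarrow> x \<in> F i \<Longrightarrow> x' \<in> F i \<Longrightarrow> i < j \<Longrightarrow> j < c \<Longrightarrow> P x (y0 j) = P x' (y0 j)"
      using F by blast
    have Ford: "\<And>i j x y. i < j \<Longrightarrow> j < c \<Longrightarrow> x \<in> F i \<Longrightarrow> y \<in> F j \<Longrightarrow> x < y"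
    proof -
      fix i j x y assume a: "i < j" "j < c" "x \<in> F i" "y \<in> F j"
      have "x \<in> E i" using FE[of i] a by auto
      moreover have "y \<in> E j" using FE[of j] a by auto
      ultimately show "x < y" using E2[rule_format, of i j x y] a by simp
    qed
    have MM: "Max (F i) < Min (F j)" if ij: "i < j" "j < c" for i j
    proof -
      have "Max (F i) \<in> F i" using Fne ij by (meson Max_in less_trans)
      moreover have "Min (F j) \<in> F j" using Fne ij by (meson Min_in)
      ultimately show ?thesis using Ford ij by blast
    qed
    have "grouping (om_pow n) (ord_nat c) P X F c"
      unfolding grouping_def
    proof (intro conjI allI impI ballI)
      fix i assume i: "i < c"
      show "F i \<subseteq> X" using FX[OF i] .
      show "large (om_pow n) (F i)" using Fl[OF i] unfolding om_pow_def .
    next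
      fix i j assume "i < c" "j < c" "i < j"
      then show "Max (F i) < Min (F j)" using MM by blast
    next
      fix i j x x' y y' assume ij: "i < c" "j < c" "i < j" and xs: "x \<in> F i" "x' \<in> F i" "y \<in> F j" "y' \<in> F j"
      have "F i \<subseteq> E i" using FE[OF ij(1)] .
      then have xE: "x \<in> E i" "x' \<in> E i" using xs by auto
      have finEj: "finite (E j)" using EX[OF ij(2)] finX finite_subset by blast
      have Ejne: "E j \<noteq> {}" using xs(3) FE[OF ij(2)] by auto
      have MinE: "Min (E j) \<in> E j" using finEj Ejne by simp
      have lt: "x < Min (E j)" "x' < Min (E j)" using E2[rule_format, of i j _ "Min (E j)"] ij xE MinE by auto
      have yG: "y \<in> G j" "y' \<in> G j" using xs FG[OF ij(2)] by auto
      have xX: "x \<in> X" "x' \<in> X" using xs FX[OF ij(1)] by auto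
      have "P x y = P x (y0 j)" using Ghom[OF ij(2) xX(1) yG(1) lt(1)] .
      also have "\<dots> = P x' (y0 j)" using Fhom[OF ij(1) xs(1,2) ij(3,2)] .
      also have "\<dots> = P x' y'" using Ghom[OF ij(2) xX(2) yG(2) lt(2)] by simp
      finally show "P x y = P x' y'" .
    next
      let ?M = "(\<lambda>i. Max (F i)) ` {..<c}"
      have inj: "inj_on (\<lambda>i. Max (F i)) {..<c}"
      proof (rule inj_onI)
        fix i j assume ij: "i \<in> {..<c}" "j \<in> {..<c}" and eq: "Max (F i) = Max (F j)"
        show "i = j"
        proof (rule ccontr)
          assume "i \<noteq> j"
          then consider "i < j" | "j < i" by linarith
          then show False
          proof cases
            case 1
            have "Max (F i) < Min (F j)" using MM 1 ij by auto
            moreover have "F j \<noteq> {} \<and> finite (F j)" using Fne ij by simp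
            then have "Min (F j) \<le> Max (F j)" by (auto intro!: Min_le Max_in)
            ultimately show False using eq by simp
          next
            case 2
            have "Max (F j) < Min (F i)" using MM 2 ij by auto
            moreover have "F i \<noteq> {} \<and> finite (F i)" using Fne ij by simp
            then have "Min (F i) \<le> Max (F i)" by (auto intro!: Min_le Max_in)
            ultimately show False using eq by simp
          qed
        qed
      qed
      have cM: "card ?M = c" using card_image[OF inj] by simp
      have "length (sorted_list_of_set ?M) = c" using cM by simp
      then show "large (ord_nat c) ?M" unfolding large_def ord_nat_def using foldl_rep0 by simp
    qed
    then show "\<exists>F l. grouping (om_pow n) (ord_nat c) P X F l" by blast
  qed
qed

end
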